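(* Let $\mathbb{F}$ be a field and $n\ge 0$ an integer with $|\mathbb{F}| \geq 2n-1$. Let $V$ be an $\mathbb{F}$-vector space of dimension $2n$, and let $s$ be a symplectic form on $V$. Let $\mathcal{S}$ be a linear subspace of $\mathcal{A}_s$ that has trivial spectrum. Then $\dim \mathcal{S} \leq n(n-1)$.
   Context: A bilinear form $b$ on $V$ is alternating if $b(x,x)=0$ for all $x\in V$, and symplectic if it is alternating and non-degenerate. $\mathcal{A}_s$ denotes the space of all $s$-alternating endomorphisms of $V$, i.e. endomorphisms $u$ of $V$ such that $s(x,u(x))=0$ for all $x\in V$. An endomorphism $u$ has trivial spectrum if it has no nonzero eigenvalue in $\mathbb{F}$; a linear subspace of endomorphisms has trivial spectrum if all its elements have trivial spectrum. The field $\mathbb{F}$ may have any characteristic, including 2. *)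

theory Defs
  imports Complex_Main "HOL-Library.Function_Algebras"
begin

definition bilinear_form :: "('a::field \<Rightarrow> 'v::ab_group_add \<Rightarrow> 'v) \<Rightarrow> ('v \<Rightarrow> 'v \<Rightarrow> 'a) \<Rightarrow> bool" where
  "bilinear_form scale b \<longleftrightarrow>
     (\<forall>x. Vector_Spaces.linear scale (*) (b x)) \<and>
     (\<forall>y. Vector_Spaces.linear scale (*) (\<lambda>x. b x y))"

definition alternating_form :: "('a::field \<Rightarrow> 'v::ab_group_add \<Rightarrow> 'v) \<Rightarrow> ('v \<Rightarrow> 'v \<Rightarrow> 'a) \<Rightarrow> bool" where
  "alternating_form scale b \<longleftrightarrow> bilinear_form scale b \<and> (\<forall>x. b x x = 0)"

definition nondegenerate_form :: "('v::ab_group_add \<Rightarrow> 'v \<Rightarrow> 'a::field) \<Rightarrow> bool" where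
  "nondegenerate_form b \<longleftrightarrow> (\<forall>x. (\<forall>y. b x y = 0) \<longrightarrow> x = 0)"

definition symplectic_form :: "('a::field \<Rightarrow> 'v::ab_group_add \<Rightarrow> 'v) \<Rightarrow> ('v \<Rightarrow> 'v \<Rightarrow> 'a) \<Rightarrow> bool" where
  "symplectic_form scale s \<longleftrightarrow> alternating_form scale s \<and> nondegenerate_form s"

definition alt_endos :: "('a::field \<Rightarrow> 'v::ab_group_add \<Rightarrow> 'v) \<Rightarrow> ('v \<Rightarrow> 'v \<Rightarrow> 'a) \<Rightarrow> ('v \<Rightarrow> 'v) set" where
  "alt_endos scale s = {u. Vector_Spaces.linear scale scale u \<and> (\<forall>x. s x (u x) = 0)}"

definition fun_scale :: "('a::field \<Rightarrow> 'v::ab_group_add \<Rightarrow> 'v) \<Rightarrow> 'a \<Rightarrow> ('v \<Rightarrow> 'v) \<Rightarrow> ('v \<Rightarrow> 'v)" where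
  "fun_scale scale c f = (\<lambda>x. scale c (f x))"

definition is_eigenvalue :: "('a::field \<Rightarrow> 'v::ab_group_add \<Rightarrow> 'v) \<Rightarrow> ('v \<Rightarrow> 'v) \<Rightarrow> 'a \<Rightarrow> bool" where
  "is_eigenvalue scale u c \<longleftrightarrow> (\<exists>x. x \<noteq> 0 \<and> u x = scale c x)"

definition trivial_spectrum :: "('a::field \<Rightarrow> 'v::ab_group_add \<Rightarrow> 'v) \<Rightarrow> ('v \<Rightarrow> 'v) \<Rightarrow> bool" where
  "trivial_spectrum scale u \<longleftrightarrow> (\<forall>c. c \<noteq> 0 \<longrightarrow> \<not> is_eigenvalue scale u c)"

end

theory Submission
  imports Defs
begin

lemma card_Lambda:
  assumes card: "infinite (UNIV::'a::field set) \<or> 2 * Suc k \<le> card (UNIV::'a set) + 1"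
  shows "\<exists>L::'a set. finite L \<and> L \<subseteq> UNIV - {0} \<and> card L = 2 * k"
proof (cases "finite (UNIV::'a set)")
  case False
  then have "\<not> finite (UNIV - {0::'a})" by simp
  from infinite_arbitrarily_large[OF this, of "2 * k"] show ?thesis by (elim exE) (rule exI, auto)
next
  case True
  then have "card (UNIV - {0::'a}) = card (UNIV::'a set) - 1" by (simp add: card_Diff_subset)
  moreover have "2 * Suc k \<le> card (UNIV::'a set) + 1" using card True by simp
  ultimately have "2 * k \<le> card (UNIV - {0::'a})" by simp
  then obtain T where "T \<subseteq> UNIV - {0::'a}" "card T = 2 * k" "finite T"
    by (rule obtain_subset_with_card_n)
  then show ?thesis by (intro exI[of _ T]) simp
qed

context vector_space_pair begin

lemma rank_nullity_le:
  assumes lin: "Vector_Spaces.linear s1 s2 g" and sub: "vs1.subspace S"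
  shows "vs1.dim S \<le> vs2.dim (g ` S) + vs1.dim {v\<in>S. g v = 0}"
proof -
  interpret lg: Vector_Spaces.linear s1 s2 g by fact
  obtain BS where BS: "BS \<subseteq> S" "vs1.independent BS" "S \<subseteq> vs1.span BS" "card BS = vs1.dim S"
    using vs1.basis_exists by blast
  show ?thesis
  proof (cases "finite BS")
    case False
    then show ?thesis using BS(4) by simp
  next
    case True
    define K where "K = {v\<in>S. g v = 0}"
    obtain BK where BK: "BK \<subseteq> K" "vs1.independent BK" "K \<subseteq> vs1.span BK" "card BK = vs1.dim K"
      using vs1.basis_exists by blast
    have "finite BK"
      using vs1.independent_span_bound[OF True BK(2)] BK(1) BS(3) unfolding K_def by auto
    obtain BI where BI: "BI \<subseteq> g ` S" "vs2.independent BI" "g ` S \<subseteq> vs2.span BI" "card BI = vs2.dim (g ` S)"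
      using vs2.basis_exists by blast
    have gS: "g ` S \<subseteq> vs2.span (g ` BS)"
      using BS(3) lg.span_image by auto
    have "finite BI"
      using vs2.independent_span_bound[OF _ BI(2)] BI(1) gS True by auto
    have "\<forall>b\<in>BI. \<exists>a\<in>S. g a = b" using BI(1) by auto
    then obtain h where h: "\<And>b. b \<in> BI \<Longrightarrow> h b \<in> S \<and> g (h b) = b" by metis
    have span: "S \<subseteq> vs1.span (BK \<union> h ` BI)"
    proof
      fix v assume v: "v \<in> S"
      then have "g v \<in> vs2.span BI" using BI(3) by auto
      then obtain a where a: "g v = (\<Sum>b\<in>BI. s2 (a b) b)"
        using vs2.span_finite[OF \<open>finite BI\<close>] by auto
      define v' where "v' = (\<Sum>b\<in>BI. s1 (a b) (h b))"
      have v'S: "v' \<in> S" unfolding v'_def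
        by (intro vs1.subspace_sum[OF sub] vs1.subspace_scale[OF sub]) (use h in auto)
      have "g v' = (\<Sum>b\<in>BI. s2 (a b) (g (h b)))"
        unfolding v'_def by (simp add: lg.sum lg.scale)
      also have "\<dots> = g v" using a h by simp
      finally have "g (v - v') = 0" by (simp add: lg.diff)
      then have "v - v' \<in> K" unfolding K_def using v v'S vs1.subspace_diff[OF sub] by auto
      then have "v - v' \<in> vs1.span (BK \<union> h ` BI)"
        using BK(3) vs1.span_mono[of BK "BK \<union> h ` BI"] by auto
      moreover have "v' \<in> vs1.span (BK \<union> h ` BI)" unfolding v'_def
        by (intro vs1.span_sum vs1.span_scale vs1.span_base) auto
      ultimately have "(v - v') + v' \<in> vs1.span (BK \<union> h ` BI)" by (rule vs1.span_add)
      then show "v \<in> vs1.span (BK \<union> h ` BI)" by simp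
    qed
    have "vs1.dim S \<le> card (BK \<union> h ` BI)"
      by (rule vs1.dim_le_card[OF span]) (use \<open>finite BK\<close> \<open>finite BI\<close> in auto)
    also have "\<dots> \<le> card BK + card (h ` BI)" by (rule card_Un_le)
    also have "\<dots> \<le> card BK + card BI" using card_image_le[OF \<open>finite BI\<close>] by simp
    finally show ?thesis using BK(4) BI(4) K_def by simp
  qed
qed

end

locale sympl = VS: finite_dimensional_vector_space scale Basis
  for scale :: "'a::field \<Rightarrow> 'v::ab_group_add \<Rightarrow> 'v" and Basis :: "'v set" +
  fixes s :: "'v \<Rightarrow> 'v \<Rightarrow> 'a"
  assumes bil: "bilinear_form scale s" and alt0: "\<And>x. s x x = 0"
begin

lemma linR: "Vector_Spaces.linear scale (*) (s x)"
  using bil unfolding bilinear_form_def by blast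
lemma linL: "Vector_Spaces.linear scale (*) (\<lambda>x. s x y)"
  using bil unfolding bilinear_form_def by blast


lemma sR_add: "s x (a + b) = s x a + s x b"
proof -
  interpret l: Vector_Spaces.linear scale "(*)" "s x" by (rule linR)
  show ?thesis using l.add[of a b] by simp
qed

lemma sR_scale: "s x (scale c a) = c * s x a"
proof -
  interpret l: Vector_Spaces.linear scale "(*)" "s x" by (rule linR)
  show ?thesis using l.scale[of c a] by simp
qed

lemma sR_sum: "s x (sum f A) = (\<Sum>i\<in>A. s x (f i))"
proof -
  interpret l: Vector_Spaces.linear scale "(*)" "s x" by (rule linR)
  show ?thesis using l.sum[of f A] by simp
qed

lemma sR_diff: "s x (a - b) = s x a - s x b"
proof -
  interpret l: Vector_Spaces.linear scale "(*)" "s x" by (rule linR)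
  show ?thesis using l.diff[of a b] by simp
qed

lemma sR_zero[simp]: "s x 0 = 0"
proof -
  interpret l: Vector_Spaces.linear scale "(*)" "s x" by (rule linR)
  show ?thesis using l.zero by simp
qed

lemma sR_neg: "s x (- a) = - s x a"
proof -
  interpret l: Vector_Spaces.linear scale "(*)" "s x" by (rule linR)
  show ?thesis using l.neg[of a] by simp
qed

lemma sL_add: "s (a + b) y = s a y + s b y"
proof -
  interpret l: Vector_Spaces.linear scale "(*)" "\<lambda>x. s x y" by (rule linL)
  show ?thesis using l.add[of a b] by simp
qed

lemma sL_scale: "s (scale c a) y = c * s a y"
proof -
  interpret l: Vector_Spaces.linear scale "(*)" "\<lambda>x. s x y" by (rule linL)
  show ?thesis using l.scale[of c a] by simp
qed

lemma sL_sum: "s (sum f A) y = (\<Sum>i\<in>A. s (f i) y)"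
proof -
  interpret l: Vector_Spaces.linear scale "(*)" "\<lambda>x. s x y" by (rule linL)
  show ?thesis using l.sum[of f A] by simp
qed

lemma sL_diff: "s (a - b) y = s a y - s b y"
proof -
  interpret l: Vector_Spaces.linear scale "(*)" "\<lambda>x. s x y" by (rule linL)
  show ?thesis using l.diff[of a b] by simp
qed

lemma sL_zero[simp]: "s 0 y = 0"
proof -
  interpret l: Vector_Spaces.linear scale "(*)" "\<lambda>x. s x y" by (rule linL)
  show ?thesis using l.zero by simp
qed

lemma sL_neg: "s (- a) y = - s a y"
proof -
  interpret l: Vector_Spaces.linear scale "(*)" "\<lambda>x. s x y" by (rule linL)
  show ?thesis using l.neg[of a] by simp
qed

lemmas s_simps = sR_add sR_scale sR_sum sR_diff sR_neg sL_add sL_scale sL_sum sL_diff sL_neg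

lemma s_anti: "s a b = - s b a"
proof -
  have "0 = s (a + b) (a + b)" by (rule alt0[symmetric])
  also have "\<dots> = s a a + s b a + (s a b + s b b)" by (simp only: sL_add sR_add)
  also have "\<dots> = s a b + s b a" by (simp add: alt0)
  finally have "s a b + s b a = 0" by simp
  then show ?thesis by (simp add: eq_neg_iff_add_eq_0)
qed

lemma dual_family:
  assumes U: "VS.subspace U" and nd: "\<forall>z\<in>U. (\<forall>y\<in>U. s z y = 0) \<longrightarrow> z = 0"
  and fin: "finite B" and ind: "VS.independent B" and BU: "B \<subseteq> U"
  shows "\<exists>y. (\<forall>b\<in>B. y b \<in> U) \<and> (\<forall>b\<in>B. \<forall>b'\<in>B. s b' (y b) = (if b' = b then 1 else 0))"
  using fin ind BU
proof (induction B rule: finite_induct)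
  case empty
  then show ?case by simp
next
  case (insert e B)
  have indB: "VS.independent B" and eB: "e \<notin> VS.span B"
    using insert.prems(1) insert.hyps(2) VS.independent_insert by auto
  obtain y where yU: "\<forall>b\<in>B. y b \<in> U" and yd: "\<forall>b\<in>B. \<forall>b'\<in>B. s b' (y b) = (if b' = b then 1 else 0)"
    using insert.IH[OF indB] insert.prems(2) by auto
  have eU: "e \<in> U" and BU: "B \<subseteq> U" using insert.prems(2) by auto
  define e' where "e' = e - (\<Sum>b\<in>B. scale (s e (y b)) b)"
  have e'U: "e' \<in> U" unfolding e'_def
    using BU eU by (intro VS.subspace_diff[OF U] VS.subspace_sum[OF U] VS.subspace_scale[OF U]) auto
  have "e' \<noteq> 0"
  proof
    assume "e' = 0"
    then have "e = (\<Sum>b\<in>B. scale (s e (y b)) b)" unfolding e'_def by simp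
    also have "\<dots> \<in> VS.span B" by (intro VS.span_sum VS.span_scale VS.span_base) auto
    finally show False using eB by simp
  qed
  then obtain z where zU: "z \<in> U" and ez: "s e' z \<noteq> 0" using nd e'U by auto
  define z' where "z' = z - (\<Sum>b\<in>B. scale (s b z) (y b))"
  have z'U: "z' \<in> U" unfolding z'_def
    using yU zU by (intro VS.subspace_diff[OF U] VS.subspace_sum[OF U] VS.subspace_scale[OF U]) auto
  have z'B: "s b'' z' = 0" if "b'' \<in> B" for b''
  proof -
    have "s b'' z' = s b'' z - (\<Sum>b\<in>B. s b z * s b'' (y b))"
      unfolding z'_def by (simp add: s_simps)
    also have "(\<Sum>b\<in>B. s b z * s b'' (y b)) = (\<Sum>b\<in>B. if b'' = b then s b z else 0)"
      using yd that by (intro sum.cong) auto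
    also have "\<dots> = s b'' z" using that insert.hyps(1) by simp
    finally show ?thesis by simp
  qed
  have "s e z' = s e' z"
    unfolding z'_def e'_def by (simp add: s_simps mult.commute)
  then have k: "s e z' \<noteq> 0" using ez by simp
  define k where "k = s e z'"
  define ye where "ye = scale (1 / k) z'"
  have yeU: "ye \<in> U" unfolding ye_def using z'U VS.subspace_scale[OF U] by blast
  have ye1: "s e ye = 1" unfolding ye_def k_def using k by (simp add: s_simps)
  have ye0: "s b ye = 0" if "b \<in> B" for b unfolding ye_def using z'B[OF that] by (simp add: s_simps)
  define y' where "y' b = (if b = e then ye else y b - scale (s e (y b)) ye)" for b
  show ?case
  proof (intro exI[of _ y'] conjI ballI)
    fix b assume "b \<in> insert e B"
    then show "y' b \<in> U" unfolding y'_def using yeU yU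
      by (auto intro!: VS.subspace_diff[OF U] VS.subspace_scale[OF U])
  next
    fix b b' assume b: "b \<in> insert e B" and b': "b' \<in> insert e B"
    show "s b' (y' b) = (if b' = b then 1 else 0)"
    proof (cases "b = e")
      case True
      then show ?thesis using b' ye1 ye0 insert.hyps(2) unfolding y'_def by auto
    next
      case False
      then have bB: "b \<in> B" using b by auto
      show ?thesis
      proof (cases "b' = e")
        case True
        then show ?thesis using False ye1 unfolding y'_def by (simp add: s_simps)
      next
        case False
        then have "b' \<in> B" using b' by auto
        then show ?thesis using \<open>b \<noteq> e\<close> ye0 yd bB unfolding y'_def by (simp add: s_simps)
      qed
    qed
  qed
qed


lemma L_perp:
  assumes U: "VS.subspace U" and nd: "\<forall>z\<in>U. (\<forall>y\<in>U. s z y = 0) \<longrightarrow> z = 0"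
  and E: "VS.subspace E" "E \<subseteq> U" and G: "VS.subspace G" "G \<subseteq> U"
  and orth: "\<forall>e\<in>E. \<forall>g\<in>G. s e g = 0"
  shows "VS.dim E + VS.dim G \<le> VS.dim U"
proof -
  obtain BG where BG: "BG \<subseteq> G" "VS.independent BG" "G \<subseteq> VS.span BG" "card BG = VS.dim G"
    using VS.basis_exists by blast
  have finBG: "finite BG" using BG(2) VS.finiteI_independent by blast
  obtain y where yU: "\<forall>b\<in>BG. y b \<in> U" and yd: "\<forall>b\<in>BG. \<forall>b'\<in>BG. s b' (y b) = (if b' = b then 1 else 0)"
    using dual_family[OF U nd finBG BG(2)] BG(1) G(2) by auto
  define Y where "Y = y ` BG"
  have inj: "inj_on y BG"
  proof
    fix b b' assume b: "b \<in> BG" and b': "b' \<in> BG" and eq: "y b = y b'"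
    have "s b (y b) = 1" using yd b by simp
    then have "s b (y b') = 1" using eq by simp
    then show "b = b'" using yd b b' by (auto split: if_splits)
  qed
  have coef: "s b' (\<Sum>b\<in>BG. scale (u b) (y b)) = u b'" if "b' \<in> BG" for u b'
  proof -
    have "s b' (\<Sum>b\<in>BG. scale (u b) (y b)) = (\<Sum>b\<in>BG. u b * s b' (y b))" by (simp add: s_simps)
    also have "\<dots> = (\<Sum>b\<in>BG. if b' = b then u b else 0)" using yd that by (intro sum.cong) auto
    also have "\<dots> = u b'" using that finBG by simp
    finally show ?thesis .
  qed
  have sumY: "(\<Sum>v\<in>Y. scale (c v) v) = (\<Sum>b\<in>BG. scale (c (y b)) (y b))" for c
    unfolding Y_def using sum.reindex[OF inj, of "\<lambda>v. scale (c v) v"] by simp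
  have indY: "VS.independent Y"
    unfolding VS.independent_explicit
  proof (intro conjI allI impI ballI)
    show "finite Y" using finBG Y_def by simp
  next
    fix c v assume 0: "(\<Sum>v\<in>Y. scale (c v) v) = 0" and v: "v \<in> Y"
    then obtain b where b: "b \<in> BG" "v = y b" unfolding Y_def by auto
    have "c (y b) = s b (\<Sum>b\<in>BG. scale (c (y b)) (y b))" using coef[OF b(1), of "\<lambda>b. c (y b)"] by simp
    also have "\<dots> = 0" using 0 sumY by simp
    finally show "c v = 0" using b by simp
  qed
  have cardY: "card Y = card BG" unfolding Y_def using card_image[OF inj] .
  have YU: "VS.span Y \<subseteq> U" using VS.span_minimal[OF _ U, of Y] yU unfolding Y_def by blast
  have int0: "E \<inter> VS.span Y \<subseteq> {0}"
  proof
    fix z assume z: "z \<in> E \<inter> VS.span Y"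
    then obtain u where u: "z = (\<Sum>v\<in>Y. scale (u v) v)"
      using VS.span_finite[of Y] finBG Y_def by auto
    then have zu: "z = (\<Sum>b\<in>BG. scale (u (y b)) (y b))" using sumY by simp
    have "u (y b) = 0" if b: "b \<in> BG" for b
    proof -
      have "u (y b) = s b z" using coef[OF b, of "\<lambda>b. u (y b)"] zu by simp
      also have "\<dots> = - s z b" by (rule s_anti)
      also have "\<dots> = 0" using orth z b BG(1) by auto
      finally show ?thesis .
    qed
    then show "z \<in> {0}" using zu by simp
  qed
  have "VS.dim {x + y |x y. x \<in> E \<and> y \<in> VS.span Y} + VS.dim (E \<inter> VS.span Y) = VS.dim E + VS.dim (VS.span Y)"
    by (rule VS.dim_sums_Int[OF E(1) VS.subspace_span])
  moreover have "VS.dim (E \<inter> VS.span Y) = 0" using int0 by simp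
  moreover have "VS.dim (VS.span Y) = VS.dim G"
    using VS.dim_span_eq_card_independent[OF indY] cardY BG(4) by simp
  moreover have "VS.dim {x + y |x y. x \<in> E \<and> y \<in> VS.span Y} \<le> VS.dim U"
    apply (rule VS.dim_subset)
    using E(2) YU VS.subspace_add[OF U] by blast
  ultimately show ?thesis by linarith
qed

end

context sympl begin

lemma FS_vs: "vector_space (fun_scale scale)"
  unfolding vector_space_def fun_scale_def
  by (auto simp: fun_eq_iff VS.scale_right_distrib VS.scale_left_distrib)

sublocale FS: vector_space "fun_scale scale" by (rule FS_vs)

lemma FV: "vector_space_pair (fun_scale scale) scale"
  by (intro vector_space_pair.intro FS_vs VS.vector_space_axioms)
lemma FF: "vector_space_pair (fun_scale scale) (fun_scale scale)"
  by (intro vector_space_pair.intro FS_vs)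
lemma VF: "vector_space_pair scale (fun_scale scale)"
  by (intro vector_space_pair.intro FS_vs VS.vector_space_axioms)
lemma VV: "finite_dimensional_vector_space_pair_1 scale Basis scale"
  by (intro finite_dimensional_vector_space_pair_1.intro VS.finite_dimensional_vector_space_axioms VS.vector_space_axioms)

lemma orth_span_L:
  assumes "\<forall>a\<in>A. \<forall>g\<in>G. s a g = 0" "e \<in> VS.span A" "g \<in> G"
  shows "s e g = 0"
proof -
  have sub: "VS.subspace {e. s e g = 0}"
    unfolding VS.subspace_def by (simp add: s_simps)
  have "VS.span A \<subseteq> {e. s e g = 0}"
    using assms(1,3) by (intro VS.span_minimal[OF _ sub]) auto
  then show ?thesis using assms(2) by auto
qed

lemma subspace_perp: "VS.subspace U \<Longrightarrow> VS.subspace {z\<in>U. \<forall>a\<in>A. s a z = 0}"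
  unfolding VS.subspace_def by (simp add: s_simps)

definition nondeg :: "'v set \<Rightarrow> bool" where
  "nondeg W \<longleftrightarrow> (\<forall>z\<in>W. (\<forall>y\<in>W. s z y = 0) \<longrightarrow> z = 0)"

definition goodR :: "'v set \<Rightarrow> ('v \<Rightarrow> 'v) set \<Rightarrow> bool" where
  "goodR W R \<longleftrightarrow> FS.subspace R \<and>
     (\<forall>f\<in>R. (\<forall>z. z \<notin> W \<longrightarrow> f z = 0) \<and>
       (\<exists>g. Vector_Spaces.linear scale scale g \<and> (\<forall>z\<in>W. f z = g z)) \<and>
       (\<forall>z\<in>W. f z \<in> W) \<and> (\<forall>z\<in>W. s z (f z) = 0) \<and>
       (\<forall>z\<in>W. \<forall>c. c \<noteq> 0 \<longrightarrow> z \<noteq> 0 \<longrightarrow> f z \<noteq> scale c z))"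

lemma goodR_lin:
  assumes "goodR W R" "f \<in> R"
  obtains g where "Vector_Spaces.linear scale scale g" "\<And>z. z \<in> W \<Longrightarrow> f z = g z"
  using assms unfolding goodR_def by (metis (no_types, lifting))

lemma goodR_out: "goodR W R \<Longrightarrow> f \<in> R \<Longrightarrow> z \<notin> W \<Longrightarrow> f z = 0"
  by (simp add: goodR_def)
lemma goodR_in: "goodR W R \<Longrightarrow> f \<in> R \<Longrightarrow> z \<in> W \<Longrightarrow> f z \<in> W"
  by (simp add: goodR_def)
lemma goodR_alt: "goodR W R \<Longrightarrow> f \<in> R \<Longrightarrow> z \<in> W \<Longrightarrow> s z (f z) = 0"
  by (simp add: goodR_def)
lemma goodR_spec: "goodR W R \<Longrightarrow> f \<in> R \<Longrightarrow> z \<in> W \<Longrightarrow> c \<noteq> 0 \<Longrightarrow> z \<noteq> 0 \<Longrightarrow> f z \<noteq> scale c z"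
  by (simp add: goodR_def)
lemma goodR_sub: "goodR W R \<Longrightarrow> FS.subspace R"
  by (simp add: goodR_def)

lemma lin_add: "Vector_Spaces.linear scale scale g \<Longrightarrow> g (a + b) = g a + g b"
  by (rule module_hom.add[OF Vector_Spaces.linear.axioms(3)])
lemma lin_scale: "Vector_Spaces.linear scale scale g \<Longrightarrow> g (scale c a) = scale c (g a)"
  by (simp add: Vector_Spaces.linear_iff)
lemma lin_diff: "Vector_Spaces.linear scale scale g \<Longrightarrow> g (a - b) = g a - g b"
  by (rule module_hom.diff[OF Vector_Spaces.linear.axioms(3)])
lemma lin_zero: "Vector_Spaces.linear scale scale g \<Longrightarrow> g 0 = 0"
  by (rule module_hom.zero[OF Vector_Spaces.linear.axioms(3)])
lemma lin_sum: "Vector_Spaces.linear scale scale g \<Longrightarrow> g (sum h A) = (\<Sum>i\<in>A. g (h i))"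
  by (rule module_hom.sum[OF Vector_Spaces.linear.axioms(3)])

lemma goodR_polar:
  assumes W: "VS.subspace W" and R: "goodR W R" and f: "f \<in> R" and a: "a \<in> W" and b: "b \<in> W"
  shows "s a (f b) = - s b (f a)"
proof -
  obtain g where g: "Vector_Spaces.linear scale scale g" "\<And>z. z \<in> W \<Longrightarrow> f z = g z"
    using goodR_lin[OF R f] by blast
  have ab: "a + b \<in> W" using W a b VS.subspace_add by blast
  have "0 = s (a + b) (f (a + b))" using goodR_alt[OF R f ab] by simp
  also have "f (a + b) = f a + f b" using g a b ab lin_add by simp
  finally have "0 = s a (f a) + s b (f a) + (s a (f b) + s b (f b))" by (simp add: s_simps)
  then have "s b (f a) + s a (f b) = 0" using goodR_alt[OF R f a] goodR_alt[OF R f b] by simp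
  then show ?thesis by (simp add: eq_neg_iff_add_eq_0 add.commute)
qed

end

context sympl begin

lemma krylov_indep:
  assumes lin: "Vector_Spaces.linear scale scale g"
  and fin: "finite L"
  and wrel: "\<forall>l\<in>L. scale l (w l) - g (w l) = c"
  and notin: "g c \<notin> VS.span (insert c (w ` L))"
  and c0: "c \<noteq> 0"
  and rel: "scale b c + (\<Sum>l\<in>L. scale (a l) (w l)) = 0"
  shows "b = 0 \<and> (\<forall>l\<in>L. a l = 0)"
  using fin wrel notin rel
proof (induction L arbitrary: a b rule: finite_induct)
  case empty
  then show ?case using c0 by simp
next
  case (insert \<mu> L)
  have wrelL: "\<forall>l\<in>L. scale l (w l) - g (w l) = c" using insert.prems(1) by simp
  have wmu: "scale \<mu> (w \<mu>) - g (w \<mu>) = c" using insert.prems(1) by simp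
  have spmono: "VS.span (insert c (w ` L)) \<subseteq> VS.span (insert c (w ` insert \<mu> L))"
    by (intro VS.span_mono) auto
  have notinL: "g c \<notin> VS.span (insert c (w ` L))" using insert.prems(2) spmono by blast
  define G where "G z = scale \<mu> z - g z" for z
  have linG: "Vector_Spaces.linear scale scale G"
    unfolding G_def Vector_Spaces.linear_iff
    by (simp add: VS.vector_space_axioms lin_add[OF lin] lin_scale[OF lin] algebra_simps VS.scale_right_diff_distrib)
  define T' where "T' = (\<Sum>l\<in>L. scale (a l * (\<mu> - l)) (w l))"
  define sa where "sa = (\<Sum>l\<in>L. a l)"
  have GwL: "G (w l) = scale (\<mu> - l) (w l) + c" if "l \<in> L" for l
  proof -
    have "g (w l) = scale l (w l) - c" using wrelL that by (simp add: algebra_simps)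
    then show ?thesis unfolding G_def by (simp add: algebra_simps VS.scale_left_diff_distrib)
  qed
  have GT: "G (\<Sum>l\<in>L. scale (a l) (w l)) = T' + scale sa c"
  proof -
    have "G (\<Sum>l\<in>L. scale (a l) (w l)) = (\<Sum>l\<in>L. scale (a l) (G (w l)))"
      by (simp add: lin_sum[OF linG] lin_scale[OF linG])
    also have "\<dots> = (\<Sum>l\<in>L. scale (a l * (\<mu> - l)) (w l) + scale (a l) c)"
      by (intro sum.cong refl) (simp add: GwL VS.scale_right_distrib)
    also have "\<dots> = T' + scale sa c"
      unfolding T'_def sa_def by (simp add: sum.distrib VS.scale_sum_left)
    finally show ?thesis .
  qed
  have rel: "scale b c + (\<Sum>l\<in>insert \<mu> L. scale (a l) (w l)) = 0" using insert.prems(3) .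
  then have rel': "scale b c + scale (a \<mu>) (w \<mu>) + (\<Sum>l\<in>L. scale (a l) (w l)) = 0"
    using insert.hyps by (simp add: add.assoc)
  have Gw: "G (w \<mu>) = c" unfolding G_def using wmu .
  have "G (scale b c + scale (a \<mu>) (w \<mu>) + (\<Sum>l\<in>L. scale (a l) (w l))) = 0"
    using rel' lin_zero[OF linG] by simp
  moreover have "G (scale b c + scale (a \<mu>) (w \<mu>) + (\<Sum>l\<in>L. scale (a l) (w l)))
      = scale b (G c) + scale (a \<mu>) (G (w \<mu>)) + G (\<Sum>l\<in>L. scale (a l) (w l))"
    by (simp add: lin_add[OF linG] lin_scale[OF linG])
  ultimately have "scale b (G c) + scale (a \<mu>) c + (T' + scale sa c) = 0"
    using GT Gw by simp
  then have eq0: "scale b (scale \<mu> c - g c) + scale (a \<mu>) c + (T' + scale sa c) = 0"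
    by (simp add: G_def)
  have eqb: "scale b (g c) = scale (b * \<mu> + a \<mu> + sa) c + T'"
  proof -
    have "scale b (g c) = scale b (g c) + (scale b (scale \<mu> c - g c) + scale (a \<mu>) c + (T' + scale sa c))"
      using eq0 by simp
    also have "\<dots> = scale (b * \<mu> + a \<mu> + sa) c + T'"
      by (simp add: algebra_simps VS.scale_right_diff_distrib VS.scale_left_distrib)
    finally show ?thesis .
  qed
  have b0: "b = 0"
  proof (rule ccontr)
    assume b: "b \<noteq> 0"
    have "scale (b * \<mu> + a \<mu> + sa) c + T' \<in> VS.span (insert c (w ` L))"
      unfolding T'_def
      by (intro VS.span_add VS.span_scale VS.span_sum VS.span_base) auto
    then have "scale (1 / b) (scale b (g c)) \<in> VS.span (insert c (w ` L))"
      using eqb VS.span_scale by metis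
    then have "g c \<in> VS.span (insert c (w ` L))" using b by simp
    then show False using notinL by simp
  qed
  have rel2: "scale (a \<mu> + sa) c + (\<Sum>l\<in>L. scale (a l * (\<mu> - l)) (w l)) = 0"
    using eqb b0 unfolding T'_def by (simp add: VS.scale_left_distrib add.commute)
  have IH: "a \<mu> + sa = 0 \<and> (\<forall>l\<in>L. a l * (\<mu> - l) = 0)"
    by (rule insert.IH[OF wrelL notinL rel2])
  have aL: "\<forall>l\<in>L. a l = 0" using IH insert.hyps(2) by auto
  then have "sa = 0" unfolding sa_def by simp
  then have "a \<mu> = 0" using IH by simp
  then show ?case using b0 aL by simp
qed

lemma scale_ind: "scale (if P then 1 else 0) v = (if P then v else 0)"
  by simp

lemma krylov_card:
  assumes lin: "Vector_Spaces.linear scale scale g"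
  and fin: "finite L"
  and wrel: "\<forall>l\<in>L. scale l (w l) - g (w l) = c"
  and notin: "g c \<notin> VS.span (insert c (w ` L))"
  and c0: "c \<noteq> 0"
  shows "VS.independent (insert c (w ` L)) \<and> card (insert c (w ` L)) = card L + 1"
proof -
  note KI = krylov_indep[OF lin fin wrel notin c0]
  have delta: "(\<Sum>t\<in>L. scale (if t = l then 1 else 0) (w t)) = w l" if "l \<in> L" for l
    using that fin by (simp add: scale_ind)
  have inj: "inj_on w L"
  proof
    fix l1 l2 assume l1: "l1 \<in> L" and l2: "l2 \<in> L" and eq: "w l1 = w l2"
    show "l1 = l2"
    proof (rule ccontr)
      assume ne: "l1 \<noteq> l2"
      define a where "a t = (if t = l1 then 1 else 0) - (if t = l2 then (1::'a) else 0)" for t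
      have "(\<Sum>t\<in>L. scale (a t) (w t)) = (\<Sum>t\<in>L. scale (if t = l1 then 1 else 0) (w t)) - (\<Sum>t\<in>L. scale (if t = l2 then 1 else 0) (w t))"
        unfolding a_def by (simp add: VS.scale_left_diff_distrib sum_subtractf)
      also have "\<dots> = 0" using delta[OF l1] delta[OF l2] eq by simp
      finally have "scale 0 c + (\<Sum>t\<in>L. scale (a t) (w t)) = 0" by simp
      then have "a l1 = 0" using KI l1 by blast
      then show False using ne unfolding a_def by simp
    qed
  qed
  have cnot: "c \<notin> w ` L"
  proof
    assume "c \<in> w ` L"
    then obtain l where l: "l \<in> L" "c = w l" by auto
    define a where "a t = - (if t = l then (1::'a) else 0)" for t
    have "(\<Sum>t\<in>L. scale (a t) (w t)) = - (\<Sum>t\<in>L. scale (if t = l then 1 else 0) (w t))"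
      unfolding a_def by (simp add: sum_negf)
    also have "\<dots> = - c" using delta[OF l(1)] l(2) by simp
    finally have "scale 1 c + (\<Sum>t\<in>L. scale (a t) (w t)) = 0" by simp
    then have "(1::'a) = 0" using KI by blast
    then show False by simp
  qed
  have sumX: "(\<Sum>v\<in>insert c (w ` L). scale (k v) v) = scale (k c) c + (\<Sum>t\<in>L. scale (k (w t)) (w t))" for k
    using cnot fin sum.reindex[OF inj, of "\<lambda>v. scale (k v) v"] by simp
  have ind: "VS.independent (insert c (w ` L))"
    unfolding VS.independent_explicit
  proof (intro conjI allI impI ballI)
    show "finite (insert c (w ` L))" using fin by simp
  next
    fix k v assume 0: "(\<Sum>v\<in>insert c (w ` L). scale (k v) v) = 0" and v: "v \<in> insert c (w ` L)"
    have "k c = 0 \<and> (\<forall>l\<in>L. k (w l) = 0)"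
      by (rule krylov_indep[OF lin fin wrel notin c0]) (use 0 sumX in simp)
    then show "k v = 0" using v by auto
  qed
  have "card (insert c (w ` L)) = card L + 1"
    using cnot fin card_image[OF inj] by simp
  then show ?thesis using ind by simp
qed

end

context sympl begin

context
  fixes W :: "'v set" and x y0 :: 'v and k :: nat
  assumes W: "VS.subspace W" and dimW: "VS.dim W = 2 * Suc k" and nd: "nondeg W"
  and xW: "x \<in> W" and x0: "x \<noteq> 0" and y0W: "y0 \<in> W" and xy0: "s x y0 = 1"
begin

definition W' where "W' = {z\<in>W. s x z = 0 \<and> s y0 z = 0}"
definition p where "p z = z - scale (s z y0) x + scale (s z x) y0"

lemma y0x: "s y0 x = -1" using s_anti[of y0 x] xy0 by simp

lemma y00: "y0 \<noteq> 0" using xy0 by auto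

lemma p_lin: "Vector_Spaces.linear scale scale p"
  unfolding p_def Vector_Spaces.linear_iff
  by (simp add: VS.vector_space_axioms s_simps algebra_simps VS.scale_right_diff_distrib VS.scale_left_distrib)

lemma W'W: "W' \<subseteq> W" unfolding W'_def by auto

lemma W'_sub: "VS.subspace W'"
proof -
  have "W' = {z\<in>W. \<forall>a\<in>{x,y0}. s a z = 0}" unfolding W'_def by auto
  then show ?thesis using subspace_perp[OF W, of "{x,y0}"] by metis
qed

lemma pW': "z \<in> W \<Longrightarrow> p z \<in> W'"
proof -
  assume z: "z \<in> W"
  have "p z \<in> W" unfolding p_def using z xW y0W W
    by (intro VS.subspace_add VS.subspace_diff VS.subspace_scale) auto
  moreover have "s x (p z) = 0" unfolding p_def
    using s_anti[of z x] by (simp add: s_simps alt0 xy0)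
  moreover have "s y0 (p z) = 0" unfolding p_def
    using s_anti[of z y0] by (simp add: s_simps alt0 y0x)
  ultimately show ?thesis unfolding W'_def by simp
qed

lemma p_id: "z \<in> W' \<Longrightarrow> p z = z"
  unfolding p_def W'_def using s_anti[of z x] s_anti[of z y0] by simp

lemma decomp: "z = p z + scale (s z y0) x - scale (s z x) y0"
  unfolding p_def by simp

lemma span_xy0_sub: "VS.span {x, y0} \<subseteq> W"
  using VS.span_minimal[OF _ W] xW y0W by auto

lemma dim_xy0: "VS.dim (VS.span {x, y0}) = 2"
proof -
  have "x \<notin> VS.span {y0}"
  proof
    assume "x \<in> VS.span {y0}"
    then obtain a where "x = scale a y0" unfolding VS.span_singleton by auto
    then have "s x y0 = 0" by (simp add: s_simps alt0)
    then show False using xy0 by simp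
  qed
  then have "VS.dim (insert x {y0}) = VS.dim {y0} + 1" using VS.dim_insert by simp
  then show ?thesis using y00 by simp
qed

lemma dimW': "VS.dim W' = 2 * k"
proof -
  have up: "VS.dim (VS.span {x, y0}) + VS.dim W' \<le> VS.dim W"
  proof (rule L_perp[OF W])
    show "\<forall>z\<in>W. (\<forall>y\<in>W. s z y = 0) \<longrightarrow> z = 0" using nd unfolding nondeg_def .
    show "VS.subspace (VS.span {x, y0})" by simp
    show "VS.span {x, y0} \<subseteq> W" by (rule span_xy0_sub)
    show "VS.subspace W'" by (rule W'_sub)
    show "W' \<subseteq> W" by (rule W'W)
    show "\<forall>e\<in>VS.span {x, y0}. \<forall>g\<in>W'. s e g = 0"
      using orth_span_L[of "{x, y0}" W'] unfolding W'_def by auto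
  qed
  have "W \<subseteq> {a + b |a b. a \<in> W' \<and> b \<in> VS.span {x, y0}}"
  proof
    fix z assume z: "z \<in> W"
    have "z = p z + (scale (s z y0) x - scale (s z x) y0)"
      using decomp[of z] by (simp add: algebra_simps)
    moreover have "scale (s z y0) x - scale (s z x) y0 \<in> VS.span {x, y0}"
      by (intro VS.span_diff VS.span_scale VS.span_base) auto
    ultimately show "z \<in> {a + b |a b. a \<in> W' \<and> b \<in> VS.span {x, y0}}"
      using pW'[OF z] by blast
  qed
  then have "VS.dim W \<le> VS.dim {a + b |a b. a \<in> W' \<and> b \<in> VS.span {x, y0}}"
    by (rule VS.dim_subset)
  also have "\<dots> \<le> VS.dim W' + VS.dim (VS.span {x, y0})"
    using VS.dim_sums_Int[OF W'_sub VS.subspace_span, of "{x, y0}"] by linarith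
  finally show ?thesis using up dimW dim_xy0 by simp
qed

lemma ndW': "nondeg W'"
  unfolding nondeg_def
proof (intro ballI impI)
  fix z assume z: "z \<in> W'" and h: "\<forall>y\<in>W'. s z y = 0"
  have "\<forall>y\<in>W. s z y = 0"
  proof
    fix y assume y: "y \<in> W"
    have "s z y = s z (p y + scale (s y y0) x - scale (s y x) y0)"
      using decomp[of y] by simp
    also have "\<dots> = s z (p y) + s y y0 * s z x - s y x * s z y0" by (simp add: s_simps)
    also have "\<dots> = 0" using h pW'[OF y] z s_anti[of z x] s_anti[of z y0] unfolding W'_def by simp
    finally show "s z y = 0" .
  qed
  then show "z = 0" using nd z W'W unfolding nondeg_def by auto
qed


context
  fixes R :: "('v \<Rightarrow> 'v) set"
  assumes R: "goodR W R"
begin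

definition Rx where "Rx = {f\<in>R. f x = 0}"
definition Th where "Th f = (\<lambda>z. if z \<in> W' then p (f z) else 0)"
definition Uc where "Uc c = (\<lambda>z. if z \<in> W then scale (s x z) c - scale (s c z) x else 0)"
definition CC where "CC = {c\<in>W'. Uc c \<in> R}"

lemma Rsub: "FS.subspace R" using goodR_sub[OF R] .

lemma Rx_sub: "FS.subspace Rx"
  unfolding Rx_def FS.subspace_def
  using FS.subspace_0[OF Rsub] FS.subspace_add[OF Rsub] FS.subspace_scale[OF Rsub]
  by (auto simp: fun_scale_def)

lemma Rx_img: "f \<in> Rx \<Longrightarrow> z \<in> W \<Longrightarrow> s x (f z) = 0"
  unfolding Rx_def using goodR_polar[OF W R _ xW, of f z] by simp

lemma Th_lin: "Vector_Spaces.linear (fun_scale scale) (fun_scale scale) Th"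
  unfolding Vector_Spaces.linear_iff Th_def
  by (simp add: FS_vs fun_eq_iff fun_scale_def lin_add[OF p_lin] lin_scale[OF p_lin])

lemma good_Th: "goodR W' (Th ` Rx)"
proof -
  have sub: "FS.subspace (Th ` Rx)"
    by (rule vector_space_pair.linear_subspace_image[OF FF Th_lin Rx_sub])
  have main: "(\<forall>z. z \<notin> W' \<longrightarrow> h z = 0) \<and>
       (\<exists>g. Vector_Spaces.linear scale scale g \<and> (\<forall>z\<in>W'. h z = g z)) \<and>
       (\<forall>z\<in>W'. h z \<in> W') \<and> (\<forall>z\<in>W'. s z (h z) = 0) \<and>
       (\<forall>z\<in>W'. \<forall>c. c \<noteq> 0 \<longrightarrow> z \<noteq> 0 \<longrightarrow> h z \<noteq> scale c z)" if hin: "h \<in> Th ` Rx" for h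
  proof -
  from hin obtain f where f: "f \<in> Rx" and h: "h = Th f" by auto
  have fR: "f \<in> R" and fx: "f x = 0" using f unfolding Rx_def by auto
  obtain g where g: "Vector_Spaces.linear scale scale g" "\<And>z. z \<in> W \<Longrightarrow> f z = g z"
    using goodR_lin[OF R fR] by blast
  have h1: "\<forall>z. z \<notin> W' \<longrightarrow> h z = 0" unfolding h Th_def by simp
  have h2: "\<exists>g. Vector_Spaces.linear scale scale g \<and> (\<forall>z\<in>W'. h z = g z)"
    by (rule exI[of _ "p o g"]) (use Vector_Spaces.linear_compose[OF g(1) p_lin] g(2) W'W in \<open>auto simp: h Th_def\<close>)
  have h3: "\<forall>z\<in>W'. h z \<in> W'" using pW' goodR_in[OF R fR] W'W unfolding h Th_def by auto
  have h4: "\<forall>z\<in>W'. s z (h z) = 0"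
  proof
    fix z assume z: "z \<in> W'"
    have zW: "z \<in> W" using z W'W by auto
    have "s z (h z) = s z (f z - scale (s (f z) y0) x + scale (s (f z) x) y0)"
      using z unfolding h Th_def p_def by simp
    also have "\<dots> = s z (f z) - s (f z) y0 * s z x + s (f z) x * s z y0" by (simp add: s_simps)
    also have "\<dots> = 0" using goodR_alt[OF R fR zW] z s_anti[of z x] s_anti[of z y0] unfolding W'_def by simp
    finally show "s z (h z) = 0" .
  qed
  have h5: "\<forall>z\<in>W'. \<forall>c. c \<noteq> 0 \<longrightarrow> z \<noteq> 0 \<longrightarrow> h z \<noteq> scale c z"
  proof (intro ballI allI impI notI)
    fix z c assume z: "z \<in> W'" and c: "c \<noteq> 0" and z0: "z \<noteq> 0" and eq: "h z = scale c z"
    have zW: "z \<in> W" using z W'W by auto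
    have pf: "p (f z) = scale c z" using eq z unfolding h Th_def by simp
    have fzx: "s (f z) x = 0" using Rx_img[OF f zW] s_anti[of "f z" x] by simp
    define \<alpha> where "\<alpha> = s (f z) y0"
    have fz: "f z = scale c z + scale \<alpha> x"
      using decomp[of "f z"] pf fzx unfolding \<alpha>_def by simp
    define y where "y = z + scale (\<alpha> / c) x"
    have yW: "y \<in> W" unfolding y_def using zW xW W by (intro VS.subspace_add VS.subspace_scale) auto
    have "f y = g z + scale (\<alpha> / c) (g x)" unfolding y_def using g yW[unfolded y_def]
      by (simp add: lin_add[OF g(1)] lin_scale[OF g(1)])
    also have "\<dots> = f z" using g(2)[OF zW] g(2)[OF xW] fx by simp
    also have "\<dots> = scale c y" unfolding y_def fz using c by (simp add: VS.scale_right_distrib)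
    finally have fy: "f y = scale c y" .
    have "y \<noteq> 0"
    proof
      assume y0': "y = 0"
      have "s y0 y = s y0 z + (\<alpha> / c) * s y0 x" unfolding y_def by (simp add: s_simps)
      also have "\<dots> = - (\<alpha> / c)" using z y0x unfolding W'_def by simp
      finally have "\<alpha> / c = 0" using y0' by simp
      then have "y = z" unfolding y_def by simp
      then show False using z0 y0' by simp
    qed
    then show False using goodR_spec[OF R fR yW c] fy by simp
  qed
show ?thesis by (intro conjI h1 h2 h3 h4 h5)
  qed
  show ?thesis unfolding goodR_def by (rule conjI[OF sub ballI[OF main]])
qed

lemma Uc_lin: "Vector_Spaces.linear scale (fun_scale scale) Uc"
  unfolding Vector_Spaces.linear_iff Uc_def
  by (simp add: FS_vs VS.vector_space_axioms fun_eq_iff fun_scale_def s_simps algebra_simps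
      VS.scale_right_diff_distrib VS.scale_left_distrib)

lemma Uc_add: "Uc (a + b) = Uc a + Uc b"
  using Uc_lin by (simp add: Vector_Spaces.linear_iff)
lemma Uc_scale: "Uc (scale c a) = fun_scale scale c (Uc a)"
  using Uc_lin by (simp add: Vector_Spaces.linear_iff)
lemma Uc_0: "Uc 0 = 0"
  unfolding Uc_def by (simp add: fun_eq_iff)

lemma CC_sub: "VS.subspace CC"
  unfolding VS.subspace_def CC_def
  using FS.subspace_0[OF Rsub] FS.subspace_add[OF Rsub] FS.subspace_scale[OF Rsub]
    VS.subspace_0[OF W'_sub] VS.subspace_add[OF W'_sub] VS.subspace_scale[OF W'_sub]
  by (auto simp: Uc_add Uc_scale Uc_0)

lemma CC_W': "CC \<subseteq> W'" unfolding CC_def by auto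

lemma ker_sub: "{f\<in>Rx. Th f = 0} \<subseteq> Uc ` CC"
proof
  fix f assume "f \<in> {f\<in>Rx. Th f = 0}"
  then have f: "f \<in> Rx" and Thf: "Th f = 0" by auto
  have fR: "f \<in> R" and fx: "f x = 0" using f unfolding Rx_def by auto
  obtain g where g: "Vector_Spaces.linear scale scale g" "\<And>z. z \<in> W \<Longrightarrow> f z = g z"
    using goodR_lin[OF R fR] by blast
  define c where "c = f y0"
  have cW': "c \<in> W'"
    unfolding W'_def c_def using goodR_in[OF R fR y0W] Rx_img[OF f y0W] goodR_alt[OF R fR y0W] by simp
  have fw: "f w = scale (s w c) x" if w: "w \<in> W'" for w
  proof -
    have wW: "w \<in> W" using w W'W by auto
    have "p (f w) = 0" using fun_cong[OF Thf, of w] w unfolding Th_def by simp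
    moreover have "s (f w) x = 0" using Rx_img[OF f wW] s_anti[of "f w" x] by simp
    moreover have "s (f w) y0 = s w c"
      using s_anti[of "f w" y0] goodR_polar[OF W R fR y0W wW] unfolding c_def by simp
    ultimately show ?thesis using decomp[of "f w"] by simp
  qed
  have "f = Uc c"
  proof
    fix z show "f z = Uc c z"
    proof (cases "z \<in> W")
      case False
      then show ?thesis using goodR_out[OF R fR False] unfolding Uc_def by simp
    next
      case True
      have pz: "p z \<in> W'" using pW'[OF True] .
      have "f z = g (p z + scale (s z y0) x - scale (s z x) y0)" using g(2)[OF True] decomp[of z] by simp
      also have "\<dots> = g (p z) + scale (s z y0) (g x) - scale (s z x) (g y0)"
        by (simp add: lin_add[OF g(1)] lin_diff[OF g(1)] lin_scale[OF g(1)])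
      also have "\<dots> = f (p z) - scale (s z x) c"
        using g(2) pz W'W xW y0W fx unfolding c_def by auto
      also have "\<dots> = scale (s (p z) c) x - scale (s z x) c" using fw[OF pz] by simp
      also have "s (p z) c = s z c" unfolding p_def using cW' unfolding W'_def by (simp add: s_simps)
      finally have "f z = scale (s z c) x - scale (s z x) c" .
      then show ?thesis unfolding Uc_def using True s_anti[of z c] s_anti[of z x]
        by (simp add: algebra_simps)
    qed
  qed
  then have "c \<in> CC" unfolding CC_def using cW' fR by simp
  then show "f \<in> Uc ` CC" using \<open>f = Uc c\<close> by blast
qed

lemma dim_ker: "FS.dim {f\<in>Rx. Th f = 0} \<le> VS.dim CC"
proof -
  obtain BC where BC: "BC \<subseteq> CC" "VS.independent BC" "CC \<subseteq> VS.span BC" "card BC = VS.dim CC"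
    using VS.basis_exists by blast
  have fin: "finite BC" using BC(2) VS.finiteI_independent by blast
  have "{f\<in>Rx. Th f = 0} \<subseteq> Uc ` VS.span BC" using ker_sub BC(3) by blast
  also have "\<dots> = FS.span (Uc ` BC)"
    using vector_space_pair.linear_span_image[OF VF Uc_lin] by simp
  finally have "FS.dim {f\<in>Rx. Th f = 0} \<le> card (Uc ` BC)"
    using FS.dim_le_card fin by blast
  also have "\<dots> \<le> card BC" using card_image_le[OF fin] .
  finally show ?thesis using BC(4) by simp
qed



lemma VVp: "vector_space_pair scale scale"
  by (intro vector_space_pair.intro VS.vector_space_axioms)


lemma surj_shift:
  assumes fR: "f \<in> R" and l: "l \<noteq> 0" and c: "c \<in> W"
  shows "\<exists>w\<in>W. scale l w - f w = c"
proof -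
  obtain g where g: "Vector_Spaces.linear scale scale g" "\<And>z. z \<in> W \<Longrightarrow> f z = g z"
    using goodR_lin[OF R fR] by blast
  define G where "G z = scale l z - g z" for z
  have linG: "Vector_Spaces.linear scale scale G"
    unfolding G_def Vector_Spaces.linear_iff
    by (simp add: VS.vector_space_axioms lin_add[OF g(1)] lin_scale[OF g(1)] algebra_simps VS.scale_right_diff_distrib)
  have GW: "G ` W \<subseteq> W"
    using goodR_in[OF R fR] g(2) W unfolding G_def by (auto intro!: VS.subspace_diff VS.subspace_scale)
  have inj: "inj_on G W"
  proof
    fix a b assume a: "a \<in> W" and b: "b \<in> W" and eq: "G a = G b"
    have ab: "a - b \<in> W" using a b W VS.subspace_diff by blast
    have "G (a - b) = 0" using eq by (simp add: lin_diff[OF linG])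
    then have "f (a - b) = scale l (a - b)" using g(2)[OF ab] unfolding G_def by simp
    then have "a - b = 0" using goodR_spec[OF R fR ab l] by blast
    then show "a = b" by simp
  qed
  have spW: "VS.span W = W" using W by (simp add: VS.span_eq_iff)
  have injs: "inj_on G (VS.span W)" using inj spW by (simp only:)
  have dimeq: "VS.dim (G ` W) = VS.dim W"
    by (rule finite_dimensional_vector_space_pair_1.dim_image_eq[OF VV linG injs])
  have subG: "VS.subspace (G ` W)"
    by (rule vector_space_pair.linear_subspace_image[OF VVp linG W])
  have GWeq: "G ` W = W"
    by (rule VS.subspace_dim_equal[OF subG W GW]) (simp add: dimeq)
  have "c \<in> G ` W" using c GWeq by (simp only:)
  then obtain w where w: "w \<in> W" "c = G w" by (rule imageE) 
  show ?thesis
  proof (rule bexI[OF _ w(1)])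
    show "scale l w - f w = c" using g(2)[OF w(1)] w(2) unfolding G_def by simp
  qed
qed

lemma key_orth:
  assumes card: "infinite (UNIV::'a set) \<or> 2 * Suc k \<le> card (UNIV::'a set) + 1"
  and vR: "v \<in> R" and cC: "c \<in> CC"
  shows "s (v x) c = 0"
proof (cases "c = 0")
  case True
  then show ?thesis by simp
next
  case c0: False
  obtain g where g: "Vector_Spaces.linear scale scale g" "\<And>z. z \<in> W \<Longrightarrow> v z = g z"
    using goodR_lin[OF R vR] by blast
  have cW': "c \<in> W'" and uR: "Uc c \<in> R" using cC unfolding CC_def by auto
  have cW: "c \<in> W" using cW' W'W by auto
  have sxc: "s x c = 0" and sy0c: "s y0 c = 0" using cW' unfolding W'_def by auto
  define w where "w l = (SOME w. w \<in> W \<and> scale l w - v w = c)" for l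
  have wprop: "w l \<in> W \<and> scale l (w l) - v (w l) = c" if l: "l \<noteq> 0" for l
    using someI_ex[of "\<lambda>w. w \<in> W \<and> scale l w - v w = c"] surj_shift[OF vR l cW] unfolding w_def by blast
  have sc: "s c (w l) = 0" if l: "l \<noteq> 0" for l
  proof -
    have wW: "w l \<in> W" using wprop[OF l] by simp
    have "s c (w l) = s (scale l (w l) - v (w l)) (w l)" using wprop[OF l] by simp
    also have "\<dots> = - s (v (w l)) (w l)" by (simp add: s_simps alt0)
    also have "\<dots> = s (w l) (v (w l))" using s_anti[of "v (w l)" "w l"] by simp
    also have "\<dots> = 0" using goodR_alt[OF R vR wW] .
    finally show ?thesis .
  qed
  have sx: "s x (w l) = 0" if l: "l \<noteq> 0" for l
  proof (rule ccontr)
    assume m0: "s x (w l) \<noteq> 0"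
    define t where "t = 1 / s x (w l)"
    have t0: "t \<noteq> 0" using m0 unfolding t_def by simp
    have wW: "w l \<in> W" using wprop[OF l] by simp
    define f' where "f' = v + fun_scale scale t (Uc c)"
    have f'R: "f' \<in> R" unfolding f'_def using Rsub vR uR by (intro FS.subspace_add FS.subspace_scale) auto
    define y where "y = scale t (w l)"
    have yW: "y \<in> W" unfolding y_def using wW W VS.subspace_scale by blast
    have w0: "w l \<noteq> 0"
    proof
      assume "w l = 0"
      then have "c = - v 0" using wprop[OF l] by simp
      also have "v 0 = 0" using g(2)[OF VS.subspace_0[OF W]] lin_zero[OF g(1)] by simp
      finally show False using c0 by simp
    qed
    have y0': "y \<noteq> 0" unfolding y_def using t0 w0 by simp
    have sxy: "s x y = 1" unfolding y_def t_def using m0 by (simp add: s_simps)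
    have scy: "s c y = 0" unfolding y_def using sc[OF l] by (simp add: s_simps)
    have "f' y = v y + scale t (Uc c y)" unfolding f'_def fun_scale_def by simp
    also have "Uc c y = c" unfolding Uc_def using yW sxy scy by simp
    also have "v y = scale t (v (w l))" unfolding y_def using g(2) wW yW[unfolded y_def]
      by (simp add: lin_scale[OF g(1)])
    also have "scale t (v (w l)) + scale t c = scale t (scale l (w l))"
    proof -
      have "scale l (w l) = c + v (w l)" using wprop[OF l] diff_eq_eq by metis
      then show ?thesis by (simp add: VS.scale_right_distrib add.commute)
    qed
    also have "\<dots> = scale l y" unfolding y_def by (simp add: mult.commute)
    finally have "f' y = scale l y" .
    then show False using goodR_spec[OF R f'R yW l y0'] by simp
  qed
  obtain L :: "'a set" where L: "finite L" "L \<subseteq> UNIV - {0}" "card L = 2 * k"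
    using card_Lambda[OF card] by blast
  define H where "H = {z\<in>W. s x z = 0 \<and> s c z = 0}"
  have Hsub: "VS.subspace H"
  proof -
    have "H = {z\<in>W. \<forall>a\<in>{x,c}. s a z = 0}" unfolding H_def by auto
    then show ?thesis using subspace_perp[OF W, of "{x,c}"] by metis
  qed
  have dimH: "VS.dim H \<le> 2 * k"
  proof -
    have "x \<notin> VS.span {c}"
    proof
      assume "x \<in> VS.span {c}"
      then obtain a where "x = scale a c" unfolding VS.span_singleton by auto
      then have "s y0 x = 0" using sy0c by (simp add: s_simps)
      then show False using y0x by simp
    qed
    then have d2: "VS.dim (VS.span {x, c}) = 2" using VS.dim_insert[of x "{c}"] c0 by simp
    have "VS.dim (VS.span {x, c}) + VS.dim H \<le> VS.dim W"
    proof (rule L_perp[OF W])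
      show "\<forall>z\<in>W. (\<forall>y\<in>W. s z y = 0) \<longrightarrow> z = 0" using nd unfolding nondeg_def .
      show "VS.subspace (VS.span {x, c})" by simp
      show "VS.span {x, c} \<subseteq> W" using VS.span_minimal[OF _ W] xW cW by auto
      show "VS.subspace H" by (rule Hsub)
      show "H \<subseteq> W" unfolding H_def by auto
      show "\<forall>e\<in>VS.span {x, c}. \<forall>g\<in>H. s e g = 0"
        using orth_span_L[of "{x, c}" H] unfolding H_def by auto
    qed
    then show ?thesis using d2 dimW by simp
  qed
  have wrel: "\<forall>l\<in>L. scale l (w l) - g (w l) = c"
  proof
    fix l assume "l \<in> L"
    then have l: "l \<noteq> 0" using L(2) by auto
    show "scale l (w l) - g (w l) = c" using wprop[OF l] g(2)[of "w l"] by simp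
  qed
  have XH: "insert c (w ` L) \<subseteq> H"
    unfolding H_def using cW sxc alt0[of c] wprop sx sc L(2) by auto
  have gc: "g c \<in> VS.span (insert c (w ` L))"
  proof (rule ccontr)
    assume notin: "g c \<notin> VS.span (insert c (w ` L))"
    have "VS.independent (insert c (w ` L)) \<and> card (insert c (w ` L)) = card L + 1"
      by (rule krylov_card[OF g(1) L(1) wrel notin c0])
    then have "card L + 1 \<le> VS.dim H" using VS.independent_card_le_dim[OF XH] by simp
    then show False using dimH L(3) by simp
  qed
  have "VS.span (insert c (w ` L)) \<subseteq> {z. s x z = 0}"
  proof (rule VS.span_minimal)
    show "insert c (w ` L) \<subseteq> {z. s x z = 0}" using XH unfolding H_def by auto
    show "VS.subspace {z. s x z = 0}" unfolding VS.subspace_def by (simp add: s_simps)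
  qed
  then have "s x (v c) = 0" using gc g(2)[OF cW] by auto
  then show ?thesis
    using s_anti[of "v x" c] goodR_polar[OF W R vR cW xW] by simp
qed


lemma phi_lin: "Vector_Spaces.linear (fun_scale scale) scale (\<lambda>f. f x)"
  unfolding Vector_Spaces.linear_iff
  by (simp add: FS_vs VS.vector_space_axioms fun_scale_def)

lemma dim_D0C:
  assumes card: "infinite (UNIV::'a set) \<or> 2 * Suc k \<le> card (UNIV::'a set) + 1"
  shows "VS.dim ((\<lambda>f. f x) ` R) + VS.dim CC \<le> 2 * k"
proof -
  define D0 where "D0 = (\<lambda>f. f x) ` R"
  define Sx where "Sx = VS.span {x}"
  have D0sub: "VS.subspace D0" unfolding D0_def
    by (rule vector_space_pair.linear_subspace_image[OF FV phi_lin Rsub])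
  have D0W: "D0 \<subseteq> W" unfolding D0_def using goodR_in[OF R _ xW] by auto
  have D0x: "d \<in> D0 \<Longrightarrow> s x d = 0" for d unfolding D0_def using goodR_alt[OF R _ xW] by auto
  have Sxsub: "VS.subspace Sx" unfolding Sx_def by simp
  have SxW: "Sx \<subseteq> W" unfolding Sx_def using VS.span_minimal[OF _ W] xW by auto
  have dimSx: "VS.dim Sx = 1" unfolding Sx_def using x0 by simp
  have Sx_el: "b \<in> Sx \<Longrightarrow> \<exists>a. b = scale a x" for b unfolding Sx_def VS.span_singleton by auto
  have D0int: "D0 \<inter> Sx \<subseteq> {0}"
  proof
    fix d assume d: "d \<in> D0 \<inter> Sx"
    then obtain f where fR: "f \<in> R" and fx: "d = f x" unfolding D0_def by auto
    obtain a where a: "d = scale a x" using Sx_el d by blast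
    show "d \<in> {0}"
    proof (cases "a = 0")
      case True then show ?thesis using a by simp
    next
      case False
      then show ?thesis using goodR_spec[OF R fR xW False x0] fx a by simp
    qed
  qed
  have CCint: "CC \<inter> Sx \<subseteq> {0}"
  proof
    fix c assume c: "c \<in> CC \<inter> Sx"
    obtain a where a: "c = scale a x" using Sx_el c by blast
    have "s y0 c = 0" using c CC_W' unfolding W'_def by auto
    then have "a = 0" using a y0x by (simp add: s_simps)
    then show "c \<in> {0}" using a by simp
  qed
  define E' where "E' = {a + b |a b. a \<in> D0 \<and> b \<in> Sx}"
  define G' where "G' = {a + b |a b. a \<in> CC \<and> b \<in> Sx}"
  have i1: "VS.dim (D0 \<inter> Sx) = 0" using D0int by simp
  have i2: "VS.dim (CC \<inter> Sx) = 0" using CCint by simp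
  have dE: "VS.dim E' = VS.dim D0 + 1"
    using VS.dim_sums_Int[OF D0sub Sxsub] i1 dimSx unfolding E'_def by simp
  have dG: "VS.dim G' = VS.dim CC + 1"
    using VS.dim_sums_Int[OF CC_sub Sxsub] i2 dimSx unfolding G'_def by simp
  have "VS.dim E' + VS.dim G' \<le> VS.dim W"
  proof (rule L_perp[OF W])
    show "\<forall>z\<in>W. (\<forall>y\<in>W. s z y = 0) \<longrightarrow> z = 0" using nd unfolding nondeg_def .
    show "VS.subspace E'" unfolding E'_def by (rule VS.subspace_sums[OF D0sub Sxsub])
    show "VS.subspace G'" unfolding G'_def by (rule VS.subspace_sums[OF CC_sub Sxsub])
    show "E' \<subseteq> W" unfolding E'_def using D0W SxW VS.subspace_add[OF W] by blast
    show "G' \<subseteq> W" unfolding G'_def using CC_W' W'W SxW VS.subspace_add[OF W] by blast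
    show "\<forall>e\<in>E'. \<forall>g\<in>G'. s e g = 0"
    proof (intro ballI)
      fix e g assume e: "e \<in> E'" and g: "g \<in> G'"
      obtain d b1 where d: "d \<in> D0" "b1 \<in> Sx" "e = d + b1" using e unfolding E'_def by auto
      obtain c b2 where c: "c \<in> CC" "b2 \<in> Sx" "g = c + b2" using g unfolding G'_def by auto
      obtain \<alpha> where \<alpha>: "b1 = scale \<alpha> x" using Sx_el d(2) by blast
      obtain \<beta> where \<beta>: "b2 = scale \<beta> x" using Sx_el c(2) by blast
      obtain f where fR: "f \<in> R" and fx: "d = f x" using d(1) unfolding D0_def by auto
      have sdc: "s d c = 0" using key_orth[OF card fR c(1)] fx by simp
      have sdx: "s d x = 0" using D0x[OF d(1)] s_anti[of d x] by simp
      have sxc: "s x c = 0" using c(1) CC_W' unfolding W'_def by auto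
      show "s e g = 0" unfolding d(3) c(3) \<alpha> \<beta>
        by (simp add: s_simps sdc sdx sxc alt0)
    qed
  qed
  then show ?thesis using dE dG dimW unfolding D0_def by simp
qed

lemma step_bound:
  assumes card: "infinite (UNIV::'a set) \<or> 2 * Suc k \<le> card (UNIV::'a set) + 1"
  shows "FS.dim R \<le> 2 * k + FS.dim (Th ` Rx)"
proof -
  have "FS.dim R \<le> VS.dim ((\<lambda>f. f x) ` R) + FS.dim {f\<in>R. f x = 0}"
    by (rule vector_space_pair.rank_nullity_le[OF FV phi_lin Rsub])
  moreover have "FS.dim Rx \<le> FS.dim (Th ` Rx) + FS.dim {f\<in>Rx. Th f = 0}"
    by (rule vector_space_pair.rank_nullity_le[OF FF Th_lin Rx_sub])
  moreover note dim_ker dim_D0C[OF card]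
  ultimately show ?thesis unfolding Rx_def by linarith
qed

end

end
end

context sympl begin

lemma main_ind:
  "VS.subspace W \<Longrightarrow> VS.dim W = 2 * m \<Longrightarrow> nondeg W \<Longrightarrow>
   (infinite (UNIV::'a set) \<or> 2 * m \<le> card (UNIV::'a set) + 1) \<Longrightarrow> goodR W R \<Longrightarrow>
   FS.dim R \<le> m * (m - 1)"
proof (induction m arbitrary: W R)
  case 0
  have W0: "W \<subseteq> {0}" using "0.prems"(2) by simp
  have "R \<subseteq> FS.span {}"
  proof
    fix f assume fR: "f \<in> R"
    obtain g where g: "Vector_Spaces.linear scale scale g" "\<And>z. z \<in> W \<Longrightarrow> f z = g z"
      using goodR_lin[OF "0.prems"(5) fR] by blast
    have "f z = 0" for z
    proof (cases "z \<in> W")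
      case True
      then have "z = 0" using W0 by auto
      then show ?thesis using g(2)[OF True] lin_zero[OF g(1)] by simp
    next
      case False
      then show ?thesis using goodR_out[OF "0.prems"(5) fR] by simp
    qed
    then have "f = 0" by (simp add: fun_eq_iff)
    then show "f \<in> FS.span {}" by simp
  qed
  then have "FS.dim R \<le> card ({} :: ('v \<Rightarrow> 'v) set)" using FS.dim_le_card by blast
  then show ?case by simp
next
  case (Suc k)
  note W = Suc.prems(1) and dimW = Suc.prems(2) and nd = Suc.prems(3) and card = Suc.prems(4)
    and R = Suc.prems(5)
  have "\<not> W \<subseteq> {0}"
  proof
    assume "W \<subseteq> {0}"
    then have "VS.dim W = 0" by simp
    then show False using dimW by simp
  qed
  then obtain x where xW: "x \<in> W" and x0: "x \<noteq> 0" by blast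
  obtain y where yW: "y \<in> W" and xy: "s x y \<noteq> 0"
    using nd xW x0 unfolding nondeg_def by blast
  define y0 where "y0 = scale (1 / s x y) y"
  have y0W: "y0 \<in> W" unfolding y0_def using yW W VS.subspace_scale by blast
  have xy0: "s x y0 = 1" unfolding y0_def using xy by (simp add: s_simps)
  have card': "infinite (UNIV::'a set) \<or> 2 * k \<le> card (UNIV::'a set) + 1" using card by auto
  have IH: "FS.dim (Th W x y0 ` Rx x R) \<le> k * (k - 1)"
    by (rule Suc.IH[OF W'_sub[OF W dimW nd xW x0 y0W xy0] dimW'[OF W dimW nd xW x0 y0W xy0]
          ndW'[OF W dimW nd xW x0 y0W xy0] card' good_Th[OF W dimW nd xW x0 y0W xy0 R]])
  have "FS.dim R \<le> 2 * k + FS.dim (Th W x y0 ` Rx x R)"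
    by (rule step_bound[OF W dimW nd xW x0 y0W xy0 R card])
  with IH have "FS.dim R \<le> 2 * k + k * (k - 1)" by simp
  also have "\<dots> = Suc k * (Suc k - 1)" by (cases k) (simp_all add: algebra_simps)
  finally show ?case .
qed

end

theorem theorem2:
  fixes scale :: "'a::field \<Rightarrow> 'v::ab_group_add \<Rightarrow> 'v"
    and s :: "'v \<Rightarrow> 'v \<Rightarrow> 'a"
    and n :: nat
    and S :: "('v \<Rightarrow> 'v) set"
  assumes card_F: "infinite (UNIV :: 'a set) \<or> int (2 * n) - 1 \<le> int (card (UNIV :: 'a set))"
    and V: "vector_space scale"
    and fin_dim: "\<exists>B. finite B \<and> module.span scale B = UNIV"
    and dim_V: "vector_space.dim scale (UNIV :: 'v set) = 2 * n"
    and symp: "symplectic_form scale s"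
    and S_sub: "S \<subseteq> alt_endos scale s"
    and S_subspace: "module.subspace (fun_scale scale) S"
    and S_triv: "\<forall>u\<in>S. trivial_spectrum scale u"
  shows "vector_space.dim (fun_scale scale) S \<le> n * (n - 1)"
proof -
  interpret V0: vector_space scale by (rule V)
  obtain B where B: "finite B" "V0.span B = UNIV" using fin_dim by blast
  obtain Bas where Bas: "Bas \<subseteq> B" "V0.independent Bas" "B \<subseteq> V0.span Bas"
    using V0.maximal_independent_subset[of B] by blast
  have finBas: "finite Bas" using Bas(1) B(1) finite_subset by blast
  have spBas: "V0.span Bas = UNIV"
    using V0.span_mono[OF Bas(3)] B(2) by (simp add: V0.span_span top.extremum_unique)
  have fdv: "finite_dimensional_vector_space scale Bas"
    by (intro finite_dimensional_vector_space.intro finite_dimensional_vector_space_axioms.intro V finBas Bas(2) spBas)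
  have alt: "alternating_form scale s" and nd: "nondegenerate_form s"
    using symp unfolding symplectic_form_def by auto
  have bil: "bilinear_form scale s" and alt0: "\<And>x. s x x = 0"
    using alt unfolding alternating_form_def by auto
  interpret X: sympl scale Bas s
    by (intro sympl.intro fdv sympl_axioms.intro bil alt0)
  have main: "(\<forall>z. z \<notin> UNIV \<longrightarrow> f z = 0) \<and>
       (\<exists>g. Vector_Spaces.linear scale scale g \<and> (\<forall>z\<in>UNIV. f z = g z)) \<and>
       (\<forall>z\<in>UNIV. f z \<in> UNIV) \<and> (\<forall>z\<in>UNIV. s z (f z) = 0) \<and>
       (\<forall>z\<in>UNIV. \<forall>c. c \<noteq> 0 \<longrightarrow> z \<noteq> 0 \<longrightarrow> f z \<noteq> scale c z)" if fS: "f \<in> S" for f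
  proof -
    have lin: "Vector_Spaces.linear scale scale f" and altf: "\<forall>x. s x (f x) = 0"
      using S_sub fS unfolding alt_endos_def by auto
    have tr: "trivial_spectrum scale f" using S_triv fS by blast
    have h5: "\<forall>z\<in>UNIV. \<forall>c. c \<noteq> 0 \<longrightarrow> z \<noteq> 0 \<longrightarrow> f z \<noteq> scale c z"
      using tr unfolding trivial_spectrum_def is_eigenvalue_def by blast
    show ?thesis using lin altf h5 by blast
  qed
  have good: "X.goodR UNIV S"
    unfolding X.goodR_def by (rule conjI[OF S_subspace ballI[OF main]])
  have ndU: "X.nondeg UNIV"
    using nd unfolding X.nondeg_def nondegenerate_form_def by blast
  have card: "infinite (UNIV::'a set) \<or> 2 * n \<le> card (UNIV::'a set) + 1"
    using card_F by linarith
  show ?thesis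
    by (rule X.main_ind[OF V0.subspace_UNIV dim_V ndU card good])
qed

end
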